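(* For every integer $n\ge 2$ there is a planar interval colourable graph $G$ on $n$ vertices with $t(G)=\lfloor 3n/2\rfloor-2$. In particular the bound of $\frac32 n-2$ on $t(G)$ for planar interval colourable $n$-vertex graphs is attained for every even $n\ge 2$.
   Context: An interval colouring of a graph $G$ is a proper edge-colouring $c\colon E(G)\to\mathbb{N}$ such that for every vertex $v$, the set of colours on edges incident to $v$ is a set of consecutive integers. For an interval colourable graph $G$, $t(G)$ denotes the greatest number of distinct colours used in an interval colouring of $G$. *)

theory Defs
  imports "HOL-Analysis.Analysis"
begin

definition simple_graph :: "'a set \<Rightarrow> 'a set set \<Rightarrow> bool" where
  "simple_graph V E \<longleftrightarrow> finite V \<and>
     (\<forall>e\<in>E. \<exists>u v. u \<in> V \<and> v \<in> V \<and> u \<noteq> v \<and> e = {u, v})"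

definition planar_embedding ::
  "'a set \<Rightarrow> 'a set set \<Rightarrow> ('a \<Rightarrow> complex) \<Rightarrow> ('a set \<Rightarrow> real \<Rightarrow> complex) \<Rightarrow> bool" where
  "planar_embedding V E p \<gamma> \<longleftrightarrow> inj_on p V \<and>
     (\<forall>e\<in>E. arc (\<gamma> e) \<and> {pathstart (\<gamma> e), pathfinish (\<gamma> e)} = p ` e) \<and>
     (\<forall>e\<in>E. \<forall>v\<in>V. v \<notin> e \<longrightarrow> p v \<notin> path_image (\<gamma> e)) \<and>
     (\<forall>e\<in>E. \<forall>e'\<in>E. e \<noteq> e' \<longrightarrow> path_image (\<gamma> e) \<inter> path_image (\<gamma> e') \<subseteq> p ` (e \<inter> e'))"

definition planar :: "'a set \<Rightarrow> 'a set set \<Rightarrow> bool" where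
  "planar V E \<longleftrightarrow> (\<exists>p \<gamma>. planar_embedding V E p \<gamma>)"

definition interval_colouring :: "'a set \<Rightarrow> 'a set set \<Rightarrow> ('a set \<Rightarrow> nat) \<Rightarrow> bool" where
  "interval_colouring V E c \<longleftrightarrow>
     (\<forall>e\<in>E. \<forall>e'\<in>E. e \<noteq> e' \<and> e \<inter> e' \<noteq> {} \<longrightarrow> c e \<noteq> c e') \<and>
     (\<forall>v\<in>V. \<exists>a b. c ` {e\<in>E. v \<in> e} = {a..b})"

definition interval_colourable :: "'a set \<Rightarrow> 'a set set \<Rightarrow> bool" where
  "interval_colourable V E \<longleftrightarrow> (\<exists>c. interval_colouring V E c)"

definition t_max :: "'a set \<Rightarrow> 'a set set \<Rightarrow> nat" where
  "t_max V E = Max {card (c ` E) | c. interval_colouring V E c}"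

end

theory Submission
  imports Defs
begin


definition rg :: "nat \<Rightarrow> nat set" where "rg j = {2*j, 2*j+1}"
definition cr :: "nat \<Rightarrow> nat \<Rightarrow> nat \<Rightarrow> nat set" where "cr j a b = {2*j+a, 2*j+2+b}"
definition pd :: "nat \<Rightarrow> nat set" where "pd k = {0, 2*k}"
definition Ek :: "nat \<Rightarrow> nat \<Rightarrow> nat set set" where
  "Ek k r = {rg j | j. j < k} \<union> {cr j a b | j a b. j+1 < k \<and> a < 2 \<and> b < 2} \<union> (if r = 1 then {pd k} else {})"
definition Dg :: "nat \<Rightarrow> nat \<Rightarrow> nat \<Rightarrow> nat \<Rightarrow> int" where
  "Dg k r j a = 1 + (if 0<j then 2 else 0) + (if j+1<k then 2 else 0) + (if j=0 \<and> a=0 \<and> r=1 then 1 else 0)"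

lemma rg_in: "j < k \<Longrightarrow> rg j \<in> Ek k r" by (auto simp: Ek_def)
lemma cr_in: "j+1 < k \<Longrightarrow> a < 2 \<Longrightarrow> b < 2 \<Longrightarrow> cr j a b \<in> Ek k r" by (auto simp: Ek_def)
lemma pd_in: "r = 1 \<Longrightarrow> pd k \<in> Ek k r" by (auto simp: Ek_def)

lemma mem_rg: "v \<in> rg j \<longleftrightarrow> v = 2*j \<or> v = 2*j+1" by (auto simp: rg_def)
lemma mem_cr: "v \<in> cr j a b \<longleftrightarrow> v = 2*j+a \<or> v = 2*j+2+b" by (auto simp: cr_def)
lemma mem_pd: "v \<in> pd k \<longleftrightarrow> v = 0 \<or> v = 2*k" by (auto simp: pd_def)

lemma cr_eq: "a<2 \<Longrightarrow> b<2 \<Longrightarrow> a'<2 \<Longrightarrow> b'<2 \<Longrightarrow> cr j a b = cr j' a' b' \<longleftrightarrow> j=j' \<and> a=a' \<and> b=b'"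
  unfolding cr_def by (auto simp: doubleton_eq_iff; presburger)
lemma cr_rg: "a<2 \<Longrightarrow> cr j a b \<noteq> rg j'"
  unfolding cr_def rg_def by (auto simp: doubleton_eq_iff; presburger)
lemma rg_eq: "rg j = rg j' \<longleftrightarrow> j = j'"
  unfolding rg_def by (auto simp: doubleton_eq_iff; presburger)
lemma pd_rg: "0<k \<Longrightarrow> pd k \<noteq> rg j" unfolding pd_def rg_def by (auto simp: doubleton_eq_iff; presburger)
lemma pd_cr: "j+1<k \<Longrightarrow> a < 2 \<Longrightarrow> b<2 \<Longrightarrow> pd k \<noteq> cr j a b" unfolding pd_def cr_def by (auto simp: doubleton_eq_iff; presburger)

locale chain =
  fixes k r :: nat and C :: "nat set \<Rightarrow> int"
  assumes k2: "2 \<le> k" and r1: "r \<le> 1"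
  and W: "\<And>j a e e'. j<k \<Longrightarrow> a<2 \<Longrightarrow> e \<in> Ek k r \<Longrightarrow> e' \<in> Ek k r \<Longrightarrow> 2*j+a \<in> e \<Longrightarrow> 2*j+a \<in> e'
          \<Longrightarrow> C e \<le> C e' + Dg k r j a - 1"
  and P: "\<And>v e e'. e \<in> Ek k r \<Longrightarrow> e' \<in> Ek k r \<Longrightarrow> e \<noteq> e' \<Longrightarrow> v \<in> e \<Longrightarrow> v \<in> e' \<Longrightarrow> C e \<noteq> C e'"
begin

lemma near:
  assumes "j<k" "a<2" "g \<in> Ek k r" "h1 \<in> Ek k r" "h2 \<in> Ek k r" "2*j+a \<in> g" "2*j+a \<in> h1" "2*j+a \<in> h2"
    "h1 \<noteq> h2"
  shows "C h1 \<le> C g + Dg k r j a - 2 \<or> C h2 \<le> C g + Dg k r j a - 2"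
  using W[OF assms(1,2,4,3,7,6)] W[OF assms(1,2,5,3,8,6)] P[OF assms(4,5,9,7,8)] by linarith

definition RC where "RC i \<beta> \<longleftrightarrow> (\<exists>a b. a<2 \<and> b<2 \<and> C (cr i a b) \<le> \<beta>)"
definition RA where "RA i \<beta> \<longleftrightarrow> (\<forall>b<2. \<exists>a<2. C (cr i a b) \<le> \<beta>)"

lemma step1:
  assumes "RC i \<beta>" "i+2 < k"
  shows "RC (i+1) (\<beta>+3)"
proof -
  obtain a b where ab: "a<2" "b<2" "C (cr i a b) \<le> \<beta>" using assms(1) unfolding RC_def by blast
  have D: "Dg k r (i+1) b = 5" using assms(2) by (simp add: Dg_def)
  have "C (cr (i+1) b 0) \<le> C (cr i a b) + Dg k r (i+1) b - 2 \<or> C (cr (i+1) b 1) \<le> C (cr i a b) + Dg k r (i+1) b - 2"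
    apply (rule near)
    using assms(2) ab by (auto intro!: cr_in simp: mem_cr cr_eq)
  then show ?thesis unfolding RC_def
  proof
    assume "C (cr (i+1) b 0) \<le> C (cr i a b) + Dg k r (i+1) b - 2"
    then show "\<exists>a' b'. a'<2 \<and> b'<2 \<and> C (cr (i+1) a' b') \<le> \<beta>+3" using ab D by (intro exI[of _ b] exI[of _ 0]) auto
  next
    assume "C (cr (i+1) b 1) \<le> C (cr i a b) + Dg k r (i+1) b - 2"
    then show "\<exists>a' b'. a'<2 \<and> b'<2 \<and> C (cr (i+1) a' b') \<le> \<beta>+3" using ab D by (intro exI[of _ b] exI[of _ 1]) auto
  qed
qed


lemma step2:
  assumes "RC i \<beta>" "i+2 < k"
  shows "RA (i+1) (\<beta>+4)"
proof -
  obtain a b where ab: "a<2" "b<2" "C (cr i a b) \<le> \<beta>" using assms(1) unfolding RC_def by blast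
  have D: "Dg k r (i+1) b = 5" using assms(2) by (simp add: Dg_def)
  have "C (cr (i+1) b b') \<le> C (cr i a b) + Dg k r (i+1) b - 1" if "b'<2" for b'
    apply (rule W)
    using assms(2) ab that by (auto intro!: cr_in simp: mem_cr)
  then show ?thesis using ab D unfolding RA_def by force
qed

lemma iter:
  assumes "RC i \<beta>" "i \<le> l" "l+1 < k"
  shows "RC l (\<beta> + 3 * int (l - i))"
  using assms(2,3)
proof (induction l)
  case 0
  then show ?case using assms(1) by simp
next
  case (Suc l)
  show ?case
  proof (cases "i = Suc l")
    case True then show ?thesis using assms(1) by simp
  next
    case False
    then have "RC l (\<beta> + 3 * int (l - i))" using Suc by simp
    from step1[OF this] have X: "RC (l+1) (\<beta> + 3 * int (l - i) + 3)" using Suc by simp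
    have e: "\<beta> + 3 * int (l - i) + 3 = \<beta> + 3 * int (Suc l - i)" using False Suc by simp
    show ?thesis by (metis X e Suc_eq_plus1)
  qed
qed

lemma tgt_rg:
  assumes "RC i \<beta>" "i+1 < k"
  shows "C (rg (i+1)) \<le> \<beta> + (if i+2<k then 4 else 2)"
proof -
  obtain a b where ab: "a<2" "b<2" "C (cr i a b) \<le> \<beta>" using assms(1) unfolding RC_def by blast
  have "C (rg (i+1)) \<le> C (cr i a b) + Dg k r (i+1) b - 1"
    apply (rule W)
    using assms(2) ab by (auto intro!: cr_in rg_in simp: mem_cr mem_rg)
  then show ?thesis using ab by (auto simp: Dg_def)
qed

lemma tgt_cr:
  assumes "RA i \<beta>" "i+2 < k" "a'<2" "b'<2"
  shows "C (cr (i+1) a' b') \<le> \<beta> + 4"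
proof -
  obtain a where a: "a<2" "C (cr i a a') \<le> \<beta>" using assms(1,3) unfolding RA_def by blast
  have "C (cr (i+1) a' b') \<le> C (cr i a a') + Dg k r (i+1) a' - 1"
    apply (rule W)
    using assms a by (auto intro!: cr_in simp: mem_cr)
  then show ?thesis using a assms by (auto simp: Dg_def)
qed

lemma G_rg:
  assumes "RC i \<beta>" "i < l" "l < k"
  shows "C (rg l) \<le> \<beta> + 3 * int (l-1-i) + (if l+1<k then 4 else 2)"
proof -
  have "RC (l-1) (\<beta> + 3 * int (l-1-i))" by (rule iter[OF assms(1)]) (use assms in auto)
  from tgt_rg[OF this] show ?thesis using assms by simp
qed

lemma G_cr:
  assumes "RC i \<beta>" "i+1 < l" "l+1 < k" "a<2" "b<2"
  shows "C (cr l a b) \<le> \<beta> + 3 * int (l-2-i) + 8"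
proof -
  have "RC (l-2) (\<beta> + 3 * int (l-2-i))" by (rule iter[OF assms(1)]) (use assms in auto)
  then have A: "RA (l-2+1) (\<beta> + 3*int(l-2-i) + 4)" by (rule step2) (use assms in simp)
  have e1: "l-2+1 = l-1" using assms by simp
  have B: "RA (l-1) (\<beta> + 3*int(l-2-i) + 4)" using A e1 by metis
  have "C (cr (l-1+1) a b) \<le> \<beta> + 3*int(l-2-i)+4+4" by (rule tgt_cr[OF B]) (use assms in simp_all)
  moreover have e2: "l-1+1 = l" using assms by simp
  ultimately show ?thesis by simp
qed

lemma src_rg0: "RC 0 (C (rg 0) + 1) \<and> RA 0 (C (rg 0) + 2)"
proof -
  have D: "Dg k r 0 1 = 3" using k2 by (simp add: Dg_def)
  have "C (cr 0 1 0) \<le> C (rg 0) + Dg k r 0 1 - 2 \<or> C (cr 0 1 1) \<le> C (rg 0) + Dg k r 0 1 - 2"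
    apply (rule near)
    using k2 by (auto intro!: cr_in rg_in simp: mem_cr mem_rg cr_eq)
  then have 1: "RC 0 (C (rg 0) + 1)" unfolding RC_def
  proof
    assume "C (cr 0 1 0) \<le> C (rg 0) + Dg k r 0 1 - 2"
    then show "\<exists>a' b'. a'<2 \<and> b'<2 \<and> C (cr 0 a' b') \<le> C (rg 0) + 1" using D by (intro exI[of _ 1] exI[of _ 0]) auto
  next
    assume "C (cr 0 1 1) \<le> C (rg 0) + Dg k r 0 1 - 2"
    then show "\<exists>a' b'. a'<2 \<and> b'<2 \<and> C (cr 0 a' b') \<le> C (rg 0) + 1" using D by (intro exI[of _ 1] exI[of _ 1]) auto
  qed
  have *: "C (cr 0 1 b) \<le> C (rg 0) + Dg k r 0 1 - 1" if "b<2" for b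
    apply (rule W)
    using k2 that by (auto intro!: cr_in rg_in simp: mem_cr mem_rg)
  have "RA 0 (C (rg 0) + 2)" unfolding RA_def
  proof (intro allI impI)
    fix b :: nat assume "b<2"
    then show "\<exists>a<2. C (cr 0 a b) \<le> C (rg 0) + 2" using *[of b] D by (intro exI[of _ 1]) auto
  qed
  with 1 show ?thesis by simp
qed


lemma src_rgi:
  assumes "0<i" "i+1<k"
  shows "RC i (C (rg i) + 3) \<and> RA i (C (rg i) + 4)"
proof -
  have D: "Dg k r i 0 = 5" using assms by (simp add: Dg_def)
  have "C (cr i 0 0) \<le> C (rg i) + Dg k r i 0 - 2 \<or> C (cr i 0 1) \<le> C (rg i) + Dg k r i 0 - 2"
    apply (rule near)
    using assms by (auto intro!: cr_in rg_in simp: mem_cr mem_rg cr_eq)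
  then have 1: "RC i (C (rg i) + 3)" unfolding RC_def
  proof
    assume "C (cr i 0 0) \<le> C (rg i) + Dg k r i 0 - 2"
    then show "\<exists>a' b'. a'<2 \<and> b'<2 \<and> C (cr i a' b') \<le> C (rg i) + 3" using D by (intro exI[of _ 0] exI[of _ 0]) auto
  next
    assume "C (cr i 0 1) \<le> C (rg i) + Dg k r i 0 - 2"
    then show "\<exists>a' b'. a'<2 \<and> b'<2 \<and> C (cr i a' b') \<le> C (rg i) + 3" using D by (intro exI[of _ 0] exI[of _ 1]) auto
  qed
  have *: "C (cr i 0 b) \<le> C (rg i) + Dg k r i 0 - 1" if "b<2" for b
    apply (rule W)
    using assms that by (auto intro!: cr_in rg_in simp: mem_cr mem_rg)
  have "RA i (C (rg i) + 4)" unfolding RA_def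
  proof (intro allI impI)
    fix b :: nat assume "b<2"
    then show "\<exists>a<2. C (cr i a b) \<le> C (rg i) + 4" using *[of b] D by (intro exI[of _ 0]) auto
  qed
  with 1 show ?thesis by simp
qed

lemma src_cr:
  assumes "i+1<k" "a<2" "b<2"
  shows "RC i (C (cr i a b)) \<and> RA i (C (cr i a b) + Dg k r i a - 1)"
proof -
  have *: "C (cr i a b') \<le> C (cr i a b) + Dg k r i a - 1" if "b'<2" for b'
    apply (rule W)
    using assms that by (auto intro!: cr_in simp: mem_cr)
  have "RA i (C (cr i a b) + Dg k r i a - 1)" unfolding RA_def
  proof (intro allI impI)
    fix b' :: nat assume "b'<2"
    then show "\<exists>a'<2. C (cr i a' b') \<le> C (cr i a b) + Dg k r i a - 1" using *[of b'] assms by (intro exI[of _ a]) auto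
  qed
  moreover have "RC i (C (cr i a b))" unfolding RC_def using assms by auto
  ultimately show ?thesis by simp
qed

lemma src_pd:
  assumes "r = 1"
  shows "RC 0 (C (pd k) + 2) \<and> RA 0 (C (pd k) + 3)"
proof -
  have D: "Dg k r 0 0 = 4" using assms k2 by (simp add: Dg_def)
  have "C (cr 0 0 0) \<le> C (pd k) + Dg k r 0 0 - 2 \<or> C (cr 0 0 1) \<le> C (pd k) + Dg k r 0 0 - 2"
    apply (rule near)
    using assms k2 by (auto intro!: cr_in pd_in simp: mem_cr mem_pd cr_eq)
  then have 1: "RC 0 (C (pd k) + 2)" unfolding RC_def
  proof
    assume "C (cr 0 0 0) \<le> C (pd k) + Dg k r 0 0 - 2"
    then show "\<exists>a' b'. a'<2 \<and> b'<2 \<and> C (cr 0 a' b') \<le> C (pd k) + 2" using D by (intro exI[of _ 0] exI[of _ 0]) auto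
  next
    assume "C (cr 0 0 1) \<le> C (pd k) + Dg k r 0 0 - 2"
    then show "\<exists>a' b'. a'<2 \<and> b'<2 \<and> C (cr 0 a' b') \<le> C (pd k) + 2" using D by (intro exI[of _ 0] exI[of _ 1]) auto
  qed
  have *: "C (cr 0 0 b) \<le> C (pd k) + Dg k r 0 0 - 1" if "b<2" for b
    apply (rule W)
    using assms k2 that by (auto intro!: cr_in pd_in simp: mem_cr mem_pd)
  have "RA 0 (C (pd k) + 3)" unfolding RA_def
  proof (intro allI impI)
    fix b :: nat assume "b<2"
    then show "\<exists>a<2. C (cr 0 a b) \<le> C (pd k) + 3" using *[of b] D by (intro exI[of _ 0]) auto
  qed
  with 1 show ?thesis by simp
qed

abbreviation "T \<equiv> 3 * int k - 3 + int r"

lemma DgT: "j<k \<Longrightarrow> Dg k r j a - 1 \<le> T"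
  using k2 r1 by (auto simp: Dg_def)

lemma Dg_le5: "Dg k r j a \<le> 5"
  using k2 r1 by (auto simp: Dg_def)

lemma case_rg_rg:
  assumes "i \<le> l" "l < k"
  shows "C (rg l) \<le> C (rg i) + T"
proof (cases "i = l")
  case True then show ?thesis using k2 by simp
next
  case False
  then have il: "i < l" using assms by simp
  show ?thesis
  proof (cases "i = 0")
    case True
    have "C (rg l) \<le> C (rg 0) + 1 + 3 * int (l-1-0) + (if l+1<k then 4 else 2)"
      using G_rg[OF conjunct1[OF src_rg0]] il assms True by simp
    then show ?thesis using True il assms r1 by (auto simp: of_nat_diff split: if_splits)
  next
    case False
    have "C (rg l) \<le> C (rg i) + 3 + 3 * int (l-1-i) + (if l+1<k then 4 else 2)"
      using G_rg[OF conjunct1[OF src_rgi]] il assms False by simp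
    then show ?thesis using False il assms r1 by (auto simp: of_nat_diff split: if_splits)
  qed
qed

lemma case_rg_cr:
  assumes "i \<le> l" "l+1 < k" "a<2" "b<2"
  shows "C (cr l a b) \<le> C (rg i) + T"
proof -
  consider "l = i" | "l = i+1" | "i+2 \<le> l" using assms by linarith
  then show ?thesis
  proof cases
    case 1
    have "C (cr l a b) \<le> C (rg i) + Dg k r i a - 1"
      apply (rule W) using assms 1 by (auto intro!: cr_in rg_in simp: mem_cr mem_rg)
    then show ?thesis using DgT[of i a] assms 1 by simp
  next
    case 2
    show ?thesis
    proof (cases "i = 0")
      case True
      have "C (cr (0+1) a b) \<le> C (rg 0) + 2 + 4"
        by (rule tgt_cr[OF conjunct2[OF src_rg0]]) (use assms 2 True in auto)
      then show ?thesis using 2 True assms by simp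
    next
      case False
      have "C (cr (i+1) a b) \<le> C (rg i) + 4 + 4"
        by (rule tgt_cr[OF conjunct2[OF src_rgi]]) (use assms 2 False in auto)
      then show ?thesis using 2 False assms by simp
    qed
  next
    case 3
    show ?thesis
    proof (cases "i = 0")
      case True
      have "C (cr l a b) \<le> C (rg 0) + 1 + 3 * int (l-2-0) + 8"
        by (rule G_cr[OF conjunct1[OF src_rg0]]) (use assms 3 True in auto)
      then show ?thesis using 3 True assms by (simp add: of_nat_diff)
    next
      case False
      have "C (cr l a b) \<le> C (rg i) + 3 + 3 * int (l-2-i) + 8"
        by (rule G_cr[OF conjunct1[OF src_rgi]]) (use assms 3 False in auto)
      then show ?thesis using 3 False assms by (simp add: of_nat_diff)
    qed
  qed
qed


lemma case_cr_rg:
  assumes "i < l" "l < k" "a<2" "b<2"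
  shows "C (rg l) \<le> C (cr i a b) + T"
proof -
  have "C (rg l) \<le> C (cr i a b) + 3 * int (l-1-i) + (if l+1<k then 4 else 2)"
    by (rule G_rg[OF conjunct1[OF src_cr]]) (use assms in auto)
  then show ?thesis using assms r1 by (auto simp: of_nat_diff split: if_splits)
qed

lemma case_cr_cr:
  assumes "i \<le> l" "l+1 < k" "a<2" "b<2" "a'<2" "b'<2"
    and nspec: "k = 2 \<and> r = 0 \<Longrightarrow> a' = a \<or> b' = b"
  shows "C (cr l a' b') \<le> C (cr i a b) + T"
proof -
  consider "l = i" | "l = i+1" | "i+2 \<le> l" using assms by linarith
  then show ?thesis
  proof cases
    case 1
    consider (SA) "a' = a" | (SB) "b' = b" | (SC) "a' \<noteq> a \<and> b' \<noteq> b" by blast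
    then show ?thesis
    proof cases
      case SA
      have "C (cr l a' b') \<le> C (cr i a b) + Dg k r i a - 1"
        apply (rule W) using assms 1 SA by (auto intro!: cr_in simp: mem_cr)
      then show ?thesis using DgT[of i a] assms 1 by simp
    next
      case SB
      have "C (cr l a' b') \<le> C (cr i a b) + Dg k r (i+1) b - 1"
        apply (rule W) using assms 1 SB by (auto intro!: cr_in simp: mem_cr)
      then show ?thesis using DgT[of "i+1" b] assms 1 by simp
    next
      case SC
      have B: "Dg k r i 1 + Dg k r (i+1) c - 2 \<le> T" if "c<2" for c
        using k2 r1 nspec SC assms 1 by (auto simp: Dg_def; presburger)
      show ?thesis
      proof (cases "a = 1")
        case True
        then have a': "a' = 0" using SC assms by simp
        have h1: "C (cr i a b') \<le> C (cr i a b) + Dg k r i a - 1"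
          apply (rule W) using assms 1 by (auto intro!: cr_in simp: mem_cr)
        have h2: "C (cr l a' b') \<le> C (cr i a b') + Dg k r (i+1) b' - 1"
          apply (rule W) using assms 1 by (auto intro!: cr_in simp: mem_cr)
        show ?thesis using h1 h2 B[of b'] True assms by simp
      next
        case False
        then have a: "a = 0" "a' = 1" using SC assms by auto
        have h1: "C (cr i a' b) \<le> C (cr i a b) + Dg k r (i+1) b - 1"
          apply (rule W) using assms 1 by (auto intro!: cr_in simp: mem_cr)
        have h2: "C (cr l a' b') \<le> C (cr i a' b) + Dg k r i a' - 1"
          apply (rule W) using assms 1 by (auto intro!: cr_in simp: mem_cr)
        show ?thesis using h1 h2 B[of b] a assms by simp
      qed
    qed
  next
    case 2
    have "C (cr (i+1) a' b') \<le> C (cr i a b) + Dg k r i a - 1 + 4"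
      by (rule tgt_cr[OF conjunct2[OF src_cr]]) (use assms 2 in auto)
    moreover have "Dg k r i a + 3 \<le> T" using 2 assms k2 r1 by (auto simp: Dg_def)
    ultimately show ?thesis using 2 by simp
  next
    case 3
    have "C (cr l a' b') \<le> C (cr i a b) + 3 * int (l-2-i) + 8"
      by (rule G_cr[OF conjunct1[OF src_cr]]) (use assms 3 in auto)
    then show ?thesis using 3 assms by (simp add: of_nat_diff)
  qed
qed

end

context chain begin
lemma case_cr_cr_spec:
  assumes "k = 2" "r = 0" "a<2" "b<2"
  shows "C (cr 0 (1-a) (1-b)) \<le> C (cr 0 a b) + T"
proof -
  have D0: "Dg k r 0 c = 3" for c using assms by (simp add: Dg_def)
  have D1: "Dg k r 1 c = 3" for c using assms by (simp add: Dg_def)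
  have 1: "C (rg 1) \<le> C (cr 0 a b) + Dg k r 1 b - 1"
    apply (rule W[of 1 b]) using assms by (auto intro!: cr_in rg_in simp: mem_cr mem_rg)
  have 2: "C (cr 0 (1-a) (1-b)) \<le> C (rg 1) + Dg k r 1 (1-b) - 1"
    apply (rule W[of 1 "1-b"]) using assms by (auto intro!: cr_in rg_in simp: mem_cr mem_rg)
  have 3: "C (cr 0 a (1-b)) \<le> C (cr 0 a b) + Dg k r 0 a - 1"
    apply (rule W[of 0 a]) using assms by (auto intro!: cr_in simp: mem_cr)
  have 4: "C (cr 0 (1-a) (1-b)) \<le> C (cr 0 a (1-b)) + Dg k r 1 (1-b) - 1"
    apply (rule W[of 1 "1-b"]) using assms by (auto intro!: cr_in simp: mem_cr)
  have 5: "C (cr 0 a (1-b)) \<noteq> C (rg 1)"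
    apply (rule P[where v="2+(1-b)"]) using assms by (auto intro!: cr_in rg_in simp: mem_cr mem_rg cr_rg)
  show ?thesis using 1 2 3 4 5 D0 D1 assms by simp
qed

lemma case_pd:
  assumes "r = 1" "f \<in> Ek k r"
  shows "C f \<le> C (pd k) + T"
proof -
  have D00: "Dg k r 0 0 = 4" using assms k2 by (simp add: Dg_def)
  have D01: "Dg k r 0 1 = 3" using assms k2 by (simp add: Dg_def)
  from assms(2) consider (R) l where "l<k" "f = rg l" | (X) l a b where "l+1<k" "a<2" "b<2" "f = cr l a b"
    | (Q) "f = pd k" unfolding Ek_def using assms(1) by auto
  then show ?thesis
  proof cases
    case R
    show ?thesis
    proof (cases "l = 0")
      case True
      have "C (rg 0) \<le> C (pd k) + Dg k r 0 0 - 1"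
        apply (rule W) using assms k2 by (auto intro!: pd_in rg_in simp: mem_pd mem_rg)
      then show ?thesis using R True D00 k2 assms by simp
    next
      case False
      have "C (rg l) \<le> C (pd k) + 2 + 3 * int (l-1-0) + (if l+1<k then 4 else 2)"
        by (rule G_rg[OF conjunct1[OF src_pd]]) (use assms R False in auto)
      then show ?thesis using R False assms by (auto simp: of_nat_diff split: if_splits)
    qed
  next
    case X
    consider "l = 0" "a = 0" | "l = 0" "a = 1" | "l = 1" | "2 \<le> l" using X by linarith
    then show ?thesis
    proof cases
      case 1
      have "C (cr 0 0 b) \<le> C (pd k) + Dg k r 0 0 - 1"
        apply (rule W) using assms X by (auto intro!: pd_in cr_in simp: mem_pd mem_cr)
      then show ?thesis using X 1 D00 k2 assms by simp
    next
      case 2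
      have h1: "C (rg 0) \<le> C (pd k) + Dg k r 0 0 - 1"
        apply (rule W) using assms k2 by (auto intro!: pd_in rg_in simp: mem_pd mem_rg)
      have h2: "C (cr 0 1 b) \<le> C (rg 0) + Dg k r 0 1 - 1"
        apply (rule W) using assms X by (auto intro!: rg_in cr_in simp: mem_rg mem_cr)
      show ?thesis
      proof (cases "k = 2")
        case False
        then show ?thesis using h1 h2 X 2 D00 D01 k2 assms by simp
      next
        case True
        have h3: "C (cr 0 0 b) \<le> C (pd k) + Dg k r 0 0 - 1"
          apply (rule W) using assms X by (auto intro!: pd_in cr_in simp: mem_pd mem_cr)
        have h4: "C (cr 0 1 b) \<le> C (cr 0 0 b) + Dg k r 1 b - 1"
          apply (rule W[of 1 b]) using assms X True by (auto intro!: cr_in simp: mem_cr)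
        have D1: "Dg k r 1 b = 3" using True by (simp add: Dg_def)
        have h5: "C (cr 0 0 b) \<noteq> C (rg 0)"
          apply (rule P[where v=0]) using assms X True by (auto intro!: cr_in rg_in simp: mem_cr mem_rg cr_rg)
        show ?thesis using h1 h2 h3 h4 h5 X 2 D00 D01 D1 True assms by simp
      qed
    next
      case 3
      have "C (cr (0+1) a b) \<le> C (pd k) + 3 + 4"
        by (rule tgt_cr[OF conjunct2[OF src_pd]]) (use assms X 3 in auto)
      then show ?thesis using X 3 assms by simp
    next
      case 4
      have "C (cr l a b) \<le> C (pd k) + 2 + 3 * int (l-2-0) + 8"
        by (rule G_cr[OF conjunct1[OF src_pd]]) (use assms X 4 in auto)
      then show ?thesis using X 4 assms by (simp add: of_nat_diff)
    qed
  next
    case Q then show ?thesis using k2 by simp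
  qed
qed


lemma neg_chain: "chain k r (\<lambda>e. - C e)"
  apply unfold_locales
  using k2 r1 apply auto[2]
  subgoal for j a e e' using W[of j a e' e] by simp
  subgoal for v e e' using P[of e e' v] by simp
  done
end

lemma all_pairs:
  assumes A: "chain k r C" and e: "e \<in> Ek k r" and f: "f \<in> Ek k r"
  shows "C f \<le> C e + (3 * int k - 3 + int r)"
proof -
  interpret A: chain k r C by (rule A)
  interpret B: chain k r "\<lambda>e. - C e" by (rule A.neg_chain)
  from e consider (R) i where "i<k" "e = rg i" | (X) i a b where "i+1<k" "a<2" "b<2" "e = cr i a b"
    | (Q) "r = 1" "e = pd k" unfolding Ek_def by (auto split: if_splits)
  then show ?thesis
  proof cases
    case Q then show ?thesis using A.case_pd f by simp
  next
    case R
    from f consider (R') l where "l<k" "f = rg l" | (X') l a b where "l+1<k" "a<2" "b<2" "f = cr l a b"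
      | (Q') "r = 1" "f = pd k" unfolding Ek_def by (auto split: if_splits)
    then show ?thesis
    proof cases
      case R' then show ?thesis using R A.case_rg_rg B.case_rg_rg[of l i] by (cases "i \<le> l") auto
    next
      case X' then show ?thesis using R A.case_rg_cr[of i l a b] B.case_cr_rg[of l i a b] by (cases "i \<le> l") auto
    next
      case Q' then show ?thesis using B.case_pd[of e] e by simp
    qed
  next
    case X
    from f consider (R') l where "l<k" "f = rg l" | (X') l a' b' where "l+1<k" "a'<2" "b'<2" "f = cr l a' b'"
      | (Q') "r = 1" "f = pd k" unfolding Ek_def by (auto split: if_splits)
    then show ?thesis
    proof cases
      case R' then show ?thesis using X A.case_cr_rg[of i l a b] B.case_rg_cr[of l i a b] by (cases "i < l") auto
    next
      case X'
      show ?thesis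
      proof (cases "k = 2 \<and> r = 0 \<and> a' \<noteq> a \<and> b' \<noteq> b")
        case True
        then have "i = 0" "l = 0" "a' = 1 - a" "b' = 1 - b" using X X' by auto
        then show ?thesis using A.case_cr_cr_spec[of a b] X X' True by simp
      next
        case False
        show ?thesis
        proof (cases "i \<le> l")
          case True
          then show ?thesis using A.case_cr_cr[of i l a b a' b'] X X' False by auto
        next
          case nle: False
          then show ?thesis using B.case_cr_cr[of l i a' b' a b] X X' False by auto
        qed
      qed
    next
      case Q' then show ?thesis using B.case_pd[of e] e by simp
    qed
  qed
qed


definition Sk :: "nat \<Rightarrow> nat \<Rightarrow> nat \<Rightarrow> nat \<Rightarrow> nat set set" where
 "Sk k r j a = {rg j} \<union> (if 0<j then {cr (j-1) 0 a, cr (j-1) 1 a} else {}) \<union> (if j+1<k then {cr j a 0, cr j a 1} else {}) \<union> (if j=0 \<and> a=0 \<and> r=1 then {pd k} else {})"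

lemma inc_sub: assumes "j<k" "a<2" shows "{e \<in> Ek k r. 2*j+a \<in> e} \<subseteq> Sk k r j a"
proof
  fix e assume "e \<in> {e \<in> Ek k r. 2*j+a \<in> e}"
  then have e: "e \<in> Ek k r" "2*j+a \<in> e" by auto
  from e(1) consider (R) i where "i<k" "e = rg i" | (X) i a' b' where "i+1<k" "a'<2" "b'<2" "e = cr i a' b'"
    | (Q) "r = 1" "e = pd k" unfolding Ek_def by (auto split: if_splits)
  then show "e \<in> Sk k r j a"
  proof cases
    case R then have "i = j" using e(2) assms by (auto simp: mem_rg)
    then show ?thesis using R by (simp add: Sk_def)
  next
    case X
    then have "(i = j \<and> a' = a) \<or> (0 < j \<and> i = j - 1 \<and> b' = a)" using e(2) assms by (auto simp: mem_cr; presburger)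
    then show ?thesis
    proof
      assume h: "i = j \<and> a' = a"
      have "b' = 0 \<or> b' = 1" using X by auto
      then show ?thesis using X h by (elim disjE) (simp_all add: Sk_def)
    next
      assume h: "0 < j \<and> i = j - 1 \<and> b' = a"
      then have "a' = 0 \<or> a' = 1" using X by auto
      then show ?thesis using X h by (elim disjE) (simp_all add: Sk_def)
    qed
  next
    case Q then have "j = 0" "a = 0" using e(2) assms by (auto simp: mem_pd)
    then show ?thesis using Q by (simp add: Sk_def)
  qed
qed

lemma inc_sup: assumes "j<k" "a<2" shows "Sk k r j a \<subseteq> {e \<in> Ek k r. 2*j+a \<in> e}"
proof
  fix e assume "e \<in> Sk k r j a"
  then consider "e = rg j" | "0<j" "e = cr (j-1) 0 a" | "0<j" "e = cr (j-1) 1 a" | "j+1<k" "e = cr j a 0"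
    | "j+1<k" "e = cr j a 1" | "j=0" "a=0" "r=1" "e = pd k" unfolding Sk_def by (simp split: if_splits; blast)
  then show "e \<in> {e \<in> Ek k r. 2*j+a \<in> e}"
  proof cases
    case 1 then show ?thesis using assms rg_in[of j k r] by (simp add: mem_rg; presburger)
  next
    case 2 then show ?thesis using assms cr_in[of "j-1" k 0 a r] by (simp add: mem_cr; presburger)
  next
    case 3 then show ?thesis using assms cr_in[of "j-1" k 1 a r] by (simp add: mem_cr; presburger)
  next
    case 4 then show ?thesis using assms cr_in[of j k a 0 r] by (simp add: mem_cr; presburger)
  next
    case 5 then show ?thesis using assms cr_in[of j k a 1 r] by (simp add: mem_cr; presburger)
  next
    case 6 then show ?thesis using assms pd_in[of r k] by (simp add: mem_pd; presburger)
  qed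
qed

lemma inc_eq: assumes "j<k" "a<2" shows "{e \<in> Ek k r. 2*j+a \<in> e} = Sk k r j a"
  using inc_sub[OF assms] inc_sup[OF assms] by (rule equalityI)

lemma card2: "card {x, y} \<le> 2" by (simp add: card_insert_if)

lemma card_Sk: "int (card (Sk k r j a)) \<le> Dg k r j a"
proof -
  define A where "A = (if 0<j then {cr (j-1) 0 a, cr (j-1) 1 a} else {})"
  define B where "B = (if j+1<k then {cr j a 0, cr j a 1} else {})"
  define Q where "Q = (if j=0 \<and> a=0 \<and> r=1 then {pd k} else {})"
  have "Sk k r j a = {rg j} \<union> A \<union> B \<union> Q" unfolding Sk_def A_def B_def Q_def by simp
  have "card ({rg j} \<union> A \<union> B \<union> Q) \<le> card ({rg j} \<union> A \<union> B) + card Q" by (rule card_Un_le)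
  also have "\<dots> \<le> card ({rg j} \<union> A) + card B + card Q" by (intro add_right_mono card_Un_le)
  also have "\<dots> \<le> card {rg j} + card A + card B + card Q" by (intro add_right_mono card_Un_le)
  finally have "card (Sk k r j a) \<le> card {rg j} + card A + card B + card Q" using \<open>Sk k r j a = _\<close> by simp
  moreover have "card A \<le> (if 0<j then 2 else 0)" unfolding A_def using card2 by auto
  moreover have "card B \<le> (if j+1<k then 2 else 0)" unfolding B_def using card2 by auto
  moreover have "card Q \<le> (if j=0 \<and> a=0 \<and> r=1 then 1 else 0)" unfolding Q_def by auto
  ultimately have N: "card (Sk k r j a) \<le> 1 + (if 0<j then 2 else 0) + (if j+1<k then 2 else 0) + (if j=0 \<and> a=0 \<and> r=1 then 1 else 0)"
    by simp
  show ?thesis using N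
    by (cases "0<j"; cases "j+1<k"; cases "j=0 \<and> a=0 \<and> r=1"; auto simp: Dg_def)
qed

lemma ic_chain:
  assumes ic: "interval_colouring {0..<2*k+r} (Ek k r) c" and k: "2 \<le> k" and r: "r \<le> 1"
  shows "chain k r (\<lambda>e. int (c e))"
proof (unfold_locales)
  show "2 \<le> k" "r \<le> 1" using k r by auto
next
  have pr: "\<forall>e\<in>Ek k r. \<forall>e'\<in>Ek k r. e \<noteq> e' \<and> e \<inter> e' \<noteq> {} \<longrightarrow> c e \<noteq> c e'"
    using ic unfolding interval_colouring_def by (rule conjunct1)
  have iv: "\<forall>v\<in>{0..<2*k+r}. \<exists>a b. c ` {e\<in>Ek k r. v \<in> e} = {a..b}"
    using ic unfolding interval_colouring_def by (rule conjunct2)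
  {
    fix v e e' assume h: "e \<in> Ek k r" "e' \<in> Ek k r" "e \<noteq> e'" "v \<in> e" "v \<in> e'"
    then have "e \<inter> e' \<noteq> {}" by auto
    then show "int (c e) \<noteq> int (c e')" using pr h by simp
  }
  fix j a e e' assume h: "j<k" "a<2" "e \<in> Ek k r" "e' \<in> Ek k r" "2*j+a \<in> e" "2*j+a \<in> e'"
  define v where "v = 2*j+a"
  define I where "I = {e \<in> Ek k r. v \<in> e}"
  have vV: "v \<in> {0..<2*k+r}" using h unfolding v_def by auto
  then obtain x y where xy: "c ` I = {x..y}" using iv unfolding I_def by blast
  have inj: "inj_on c I"
  proof (rule inj_onI)
    fix e1 e2 assume "e1 \<in> I" "e2 \<in> I" "c e1 = c e2"
    then show "e1 = e2" using pr unfolding I_def by auto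
  qed
  have I: "I = Sk k r j a" unfolding I_def v_def using inc_eq h(1,2) by blast
  have eI: "e \<in> I" "e' \<in> I" using h unfolding I_def v_def by auto
  have cI: "card I = card {x..y}" using card_image[OF inj] xy by simp
  have ce: "c e \<in> {x..y}" "c e' \<in> {x..y}" using eI xy by auto
  have "int (card I) \<le> Dg k r j a" using card_Sk I by simp
  then show "int (c e) \<le> int (c e') + Dg k r j a - 1" using cI ce by auto
qed



lemma Ek_sub: "Ek k r \<subseteq> Pow {0..2*k}"
proof
  fix e assume "e \<in> Ek k r"
  then consider (R) i where "i<k" "e = rg i" | (X) i a b where "i+1<k" "a<2" "b<2" "e = cr i a b"
    | (Q) "r = 1" "e = pd k" unfolding Ek_def by (auto split: if_splits)
  then show "e \<in> Pow {0..2*k}"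
  proof cases
    case R then show ?thesis by (simp add: rg_def)
  next
    case X then show ?thesis by (simp add: cr_def)
  next
    case Q then show ?thesis by (simp add: pd_def)
  qed
qed

lemma Ek_fin: "finite (Ek k r)"
  by (rule finite_subset[OF Ek_sub]) simp

lemma ub_ge2:
  assumes ic: "interval_colouring {0..<2*k+r} (Ek k r) c" and k: "2 \<le> k" and r: "r \<le> 1"
  shows "card (c ` Ek k r) \<le> 3*k - 2 + r"
proof -
  have ch: "chain k r (\<lambda>e. int (c e))" by (rule ic_chain[OF ic k r])
  have ne: "Ek k r \<noteq> {}" using rg_in[of 0 k r] k by auto
  let ?S = "c ` Ek k r"
  have fS: "finite ?S" using Ek_fin by simp
  have nS: "?S \<noteq> {}" using ne by simp
  obtain e where e: "e \<in> Ek k r" "c e = Min ?S" using Min_in[OF fS nS] by auto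
  obtain f where f: "f \<in> Ek k r" "c f = Max ?S" using Max_in[OF fS nS] by auto
  have "int (c f) \<le> int (c e) + (3 * int k - 3 + int r)" by (rule all_pairs[OF ch e(1) f(1)])
  then have le: "Max ?S \<le> Min ?S + (3*k - 3 + r)" using e f k by linarith
  have "?S \<subseteq> {Min ?S..Max ?S}" using fS by auto
  then have "card ?S \<le> card {Min ?S..Max ?S}" by (rule card_mono[rotated]) simp
  also have "\<dots> = Max ?S + 1 - Min ?S" by simp
  finally show ?thesis using le k by linarith
qed

lemma ub_1:
  assumes r: "r \<le> 1"
  shows "card (c ` Ek 1 r) \<le> 3*1 - 2 + r"
proof -
  have "Ek 1 r \<subseteq> {rg 0, pd 1}" unfolding Ek_def by auto
  moreover have "r = 0 \<Longrightarrow> Ek 1 r \<subseteq> {rg 0}" unfolding Ek_def by auto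
  ultimately have "card (Ek 1 r) \<le> 1 + r"
  proof (cases "r = 0")
    case True
    then have "card (Ek 1 r) \<le> card {rg 0}" using \<open>r = 0 \<Longrightarrow> _\<close> by (intro card_mono) auto
    then show ?thesis by simp
  next
    case False
    then have "card (Ek 1 r) \<le> card {rg 0, pd 1}" using \<open>Ek 1 r \<subseteq> _\<close> by (intro card_mono) auto
    then show ?thesis using card2[of "rg 0" "pd 1"] False r by linarith
  qed
  then show ?thesis using card_image_le[OF Ek_fin, of c 1 r] by simp
qed

definition colk :: "nat \<Rightarrow> nat \<Rightarrow> nat set \<Rightarrow> nat" where
 "colk k r e = (if r = 1 \<and> e = pd k then 0 else if Max e = Min e + 1 \<and> even (Min e) then 3*(Min e div 2) + 1
     else 3*(Min e div 2) + 2 + (if Max e = Min e + 2 then 0 else 1))"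

lemma col_pd: "r = 1 \<Longrightarrow> colk k r (pd k) = 0" by (simp add: colk_def)
lemma col_rg: "0<k \<Longrightarrow> colk k r (rg j) = 3*j+1"
  using pd_rg[of k j] by (auto simp: colk_def rg_def)
lemma col_cr: "j+1<k \<Longrightarrow> a<2 \<Longrightarrow> b<2 \<Longrightarrow> colk k r (cr j a b) = 3*j+2 + (if a = b then 0 else 1)"
  using pd_cr[of j k a b] by (auto simp: colk_def cr_def; presburger)


lemma col_proper:
  assumes k: "0<k" and e: "e \<in> Ek k r" and e': "e' \<in> Ek k r" and ne: "e \<noteq> e'" and int: "e \<inter> e' \<noteq> {}"
  shows "colk k r e \<noteq> colk k r e'"
proof
  assume eq: "colk k r e = colk k r e'"
  from int obtain v where v: "v \<in> e" "v \<in> e'" by auto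
  from e consider (R) i where "i<k" "e = rg i" | (X) i a b where "i+1<k" "a<2" "b<2" "e = cr i a b"
    | (Q) "r = 1" "e = pd k" unfolding Ek_def by (auto split: if_splits)
  then show False
  proof cases
    case R
    from e' consider (R') l where "l<k" "e' = rg l" | (X') l a b where "l+1<k" "a<2" "b<2" "e' = cr l a b"
      | (Q') "r = 1" "e' = pd k" unfolding Ek_def by (auto split: if_splits)
    then show False
    proof cases
      case R' then show False using R eq ne k by (simp add: col_rg)
    next
      case X'
      have "3*i+1 = 3*l+2+(if a = b then 0 else 1)" using R X' eq k by (simp add: col_cr col_rg)
      then show False by (cases "a = b"; simp; presburger)
    next
      case Q' then show False using R eq k by (simp add: col_rg col_pd)
    qed
  next
    case X
    from e' consider (R') l where "l<k" "e' = rg l" | (X') l a' b' where "l+1<k" "a'<2" "b'<2" "e' = cr l a' b'"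
      | (Q') "r = 1" "e' = pd k" unfolding Ek_def by (auto split: if_splits)
    then show False
    proof cases
      case R'
      have "3*l+1 = 3*i+2+(if a = b then 0 else 1)" using R' X eq k by (simp add: col_cr col_rg)
      then show False by (cases "a = b"; simp; presburger)
    next
      case X'
      have "3*i+2+(if a = b then 0 else 1) = 3*l+2+(if a' = b' then 0 else 1)" using X X' eq by (simp add: col_cr)
      then have li: "l = i" "(a = b) = (a' = b')" by (cases "a = b"; cases "a' = b'"; simp; presburger)+
      have v1: "v = 2*i+a \<or> v = 2*i+2+b" using v(1) X by (simp add: mem_cr)
      have v2: "v = 2*l+a' \<or> v = 2*l+2+b'" using v(2) X' by (simp add: mem_cr)
      have o: "a = a' \<or> b = b'" using v1 v2 li(1) X(2) X'(2) by auto
      have "a = 0 \<or> a = 1" "b = 0 \<or> b = 1" "a' = 0 \<or> a' = 1" "b' = 0 \<or> b' = 1" using X X' by auto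
      then have "a = a' \<and> b = b'" using o li(2) by auto
      then show False using X X' li ne by simp
    next
      case Q' then show False using X eq k col_cr[of i k a b r] by (simp add: col_pd)
    qed
  next
    case Q
    from e' consider (R') l where "l<k" "e' = rg l" | (X') l a b where "l+1<k" "a<2" "b<2" "e' = cr l a b"
      | (Q') "r = 1" "e' = pd k" unfolding Ek_def by (auto split: if_splits)
    then show False
    proof cases
      case R' then show False using Q eq k by (simp add: col_rg col_pd)
    next
      case X' then show False using Q eq k col_cr[of l k a b r] by (simp add: col_pd)
    next
      case Q' then show False using Q ne by simp
    qed
  qed
qed


lemma iv4: "{x..x+(4::nat)} = {x,x+1,x+2,x+3,x+4}" by auto
lemma iv2: "{x..x+(2::nat)} = {x,x+1,x+2}" by auto
lemma iv3: "{x..x+(3::nat)} = {x,x+1,x+2,x+3}" by auto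
lemma iv1: "{x..x+(1::nat)} = {x,x+1}" by auto

lemma img_Sk:
  assumes "j<k" "a<2"
  shows "colk k r ` Sk k r j a = {3*j+1} \<union> (if 0<j then {3*(j-1)+2, 3*(j-1)+3} else {})
     \<union> (if j+1<k then {3*j+2, 3*j+3} else {}) \<union> (if j=0 \<and> a=0 \<and> r=1 then {0} else {})"
proof -
  have k: "0<k" using assms by simp
  have A: "0<j \<Longrightarrow> colk k r ` {cr (j-1) 0 a, cr (j-1) 1 a} = {3*(j-1)+2, 3*(j-1)+3}"
  proof -
    assume j: "0<j"
    have "a = 0 \<or> a = 1" using assms by auto
    then show ?thesis using j assms by (elim disjE) (auto simp: col_cr)
  qed
  have B: "j+1<k \<Longrightarrow> colk k r ` {cr j a 0, cr j a 1} = {3*j+2, 3*j+3}"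
  proof -
    assume j: "j+1<k"
    have "a = 0 \<or> a = 1" using assms by auto
    then show ?thesis using j assms by (elim disjE) (auto simp: col_cr)
  qed
  have Q: "j=0 \<and> a=0 \<and> r=1 \<Longrightarrow> colk k r ` {pd k} = {0}" by (simp add: col_pd)
  have A': "colk k r ` (if 0<j then {cr (j-1) 0 a, cr (j-1) 1 a} else {}) = (if 0<j then {3*(j-1)+2, 3*(j-1)+3} else {})"
    by (cases "0<j") (use A in simp_all)
  have B': "colk k r ` (if j+1<k then {cr j a 0, cr j a 1} else {}) = (if j+1<k then {3*j+2, 3*j+3} else {})"
    by (cases "j+1<k") (use B in simp_all)
  have Q': "colk k r ` (if j=0 \<and> a=0 \<and> r=1 then {pd k} else {}) = (if j=0 \<and> a=0 \<and> r=1 then {0} else {})"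
    by (cases "j=0 \<and> a=0 \<and> r=1") (use Q in simp_all)
  have R': "colk k r ` {rg j} = {3*j+1}" using k by (simp add: col_rg)
  show ?thesis unfolding Sk_def image_Un A' B' Q' R' by (rule refl)
qed

lemma inc_top:
  assumes "r = 1"
  shows "{e \<in> Ek k r. 2*k \<in> e} = {pd k}"
proof
  show "{pd k} \<subseteq> {e \<in> Ek k r. 2*k \<in> e}" using assms by (auto intro: pd_in simp: mem_pd)
next
  show "{e \<in> Ek k r. 2*k \<in> e} \<subseteq> {pd k}"
  proof
    fix e assume h: "e \<in> {e \<in> Ek k r. 2*k \<in> e}"
    then have e: "e \<in> Ek k r" "2*k \<in> e" by auto
    from e(1) consider (R) i where "i<k" "e = rg i" | (X) i a b where "i+1<k" "a<2" "b<2" "e = cr i a b"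
      | (Q) "e = pd k" unfolding Ek_def by (auto split: if_splits)
    then show "e \<in> {pd k}"
    proof cases
      case R then show ?thesis using e(2) by (auto simp: mem_rg)
    next
      case X then show ?thesis using e(2) by (auto simp: mem_cr)
    next
      case Q then show ?thesis by simp
    qed
  qed
qed


lemma col_iv:
  assumes k: "0<k" and r: "r \<le> 1" and v: "v < 2*k+r"
  shows "\<exists>x y. colk k r ` {e \<in> Ek k r. v \<in> e} = {x..y}"
proof (cases "v < 2*k")
  case False
  then have "r = 1" "v = 2*k" using v r by auto
  then have "colk k r ` {e \<in> Ek k r. v \<in> e} = {0..0}" using inc_top[of r k] by (simp add: col_pd)
  then show ?thesis by blast
next
  case True
  define j where "j = v div 2"
  define a where "a = v mod 2"
  have va: "v = 2*j+a" "a<2" "j<k" using True unfolding j_def a_def by auto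
  have I: "colk k r ` {e \<in> Ek k r. v \<in> e} = {3*j+1} \<union> (if 0<j then {3*(j-1)+2, 3*(j-1)+3} else {})
     \<union> (if j+1<k then {3*j+2, 3*j+3} else {}) \<union> (if j=0 \<and> a=0 \<and> r=1 then {0} else {})"
    unfolding va(1) inc_eq[OF va(3) va(2)] by (rule img_Sk[OF va(3) va(2)])
  consider "j = 0" "k = 1" | "j = 0" "1 < k" | "0 < j" "j+1<k" | "0<j" "j+1 = k" using va k by linarith
  then show ?thesis
  proof cases
    case 1
    show ?thesis
    proof (cases "a=0 \<and> r=1")
      case True
      then have "colk k r ` {e \<in> Ek k r. v \<in> e} = {0..0+1}" unfolding I using 1 by (auto simp: iv1)
      then show ?thesis by blast
    next
      case False
      then have "colk k r ` {e \<in> Ek k r. v \<in> e} = {1..1}" unfolding I using 1 by auto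
      then show ?thesis by blast
    qed
  next
    case 2
    show ?thesis
    proof (cases "a=0 \<and> r=1")
      case True
      then have "colk k r ` {e \<in> Ek k r. v \<in> e} = {0..0+3}" unfolding I using 2 by (auto simp: iv3)
      then show ?thesis by blast
    next
      case False
      then have "colk k r ` {e \<in> Ek k r. v \<in> e} = {1..1+2}" unfolding I using 2 by (auto simp: iv2)
      then show ?thesis by blast
    qed
  next
    case 3
    then obtain m where m: "j = m+1" by (metis Suc_eq_plus1 gr0_implies_Suc)
    have "colk k r ` {e \<in> Ek k r. v \<in> e} = {3*m+2..3*m+2+4}" unfolding I using 3 m by (auto simp: iv4)
    then show ?thesis by blast
  next
    case 4
    then obtain m where m: "j = m+1" by (metis Suc_eq_plus1 gr0_implies_Suc)
    have "colk k r ` {e \<in> Ek k r. v \<in> e} = {3*m+2..3*m+2+2}" unfolding I using 4 m by (auto simp: iv2)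
    then show ?thesis by blast
  qed
qed

lemma col_ic:
  assumes k: "0<k" and r: "r \<le> 1"
  shows "interval_colouring {0..<2*k+r} (Ek k r) (colk k r)"
  unfolding interval_colouring_def using col_proper[OF k] col_iv[OF k r] by auto



lemma lb_card:
  assumes k: "0<k" and r: "r \<le> 1"
  shows "3*k - 2 + r \<le> card (colk k r ` Ek k r)"
proof -
  have sub: "{1-r..3*k-2} \<subseteq> colk k r ` Ek k r"
  proof
    fix x assume x: "x \<in> {1-r..3*k-2}"
    show "x \<in> colk k r ` Ek k r"
    proof (cases "x = 0")
      case True
      then have "r = 1" using x r by auto
      then show ?thesis using True col_pd[of r k] pd_in[of r k] by force
    next
      case False
      define j where "j = (x-1) div 3"
      have xb: "x \<le> 3*k-2" using x by auto
      have dm: "x = 3*j + (x-1) mod 3 + 1" using div_mult_mod_eq[of "x-1" 3] False unfolding j_def by linarith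
      consider "(x-1) mod 3 = 0" | "(x-1) mod 3 = 1" | "(x-1) mod 3 = 2" by linarith
      then show ?thesis
      proof cases
        case 1
        then have xj: "x = 3*j+1" "j<k" using dm xb by linarith+
        then show ?thesis using col_rg[OF k, of r j] rg_in[of j k r] by force
      next
        case 2
        then have xj: "x = 3*j+2" "j+1<k" using dm xb by linarith+
        then show ?thesis using col_cr[of j k 0 0 r] cr_in[of j k 0 0 r] by force
      next
        case 3
        then have xj: "x = 3*j+3" "j+1<k" using dm xb by linarith+
        then show ?thesis using col_cr[of j k 0 1 r] cr_in[of j k 0 1 r] by force
      qed
    qed
  qed
  have "card {1-r..3*k-2} \<le> card (colk k r ` Ek k r)"
    by (rule card_mono[OF _ sub]) (simp add: Ek_fin)
  then show ?thesis using k r by auto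
qed

lemma ub_all:
  assumes k: "0<k" and r: "r \<le> 1" and ic: "interval_colouring {0..<2*k+r} (Ek k r) c"
  shows "card (c ` Ek k r) \<le> 3*k - 2 + r"
proof (cases "k = 1")
  case True then show ?thesis using ub_1[OF r, of c] by simp
next
  case False then show ?thesis using ub_ge2[OF ic _ r] k by simp
qed

lemma tmax_eq:
  assumes k: "0<k" and r: "r \<le> 1"
  shows "t_max {0..<2*k+r} (Ek k r) = 3*k - 2 + r"
proof -
  let ?S = "{card (c ` Ek k r) | c. interval_colouring {0..<2*k+r} (Ek k r) c}"
  have le: "\<forall>y\<in>?S. y \<le> 3*k - 2 + r"
  proof
    fix y assume "y \<in> ?S"
    then obtain c where c: "y = card (c ` Ek k r)" "interval_colouring {0..<2*k+r} (Ek k r) c" by blast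
    show "y \<le> 3*k - 2 + r" unfolding c(1) by (rule ub_all[OF k r c(2)])
  qed
  have fin: "finite ?S"
  proof (rule finite_subset[of _ "{..3*k-2+r}"])
    show "?S \<subseteq> {..3*k-2+r}" using le by (simp add: subset_eq)
  qed simp
  have cin: "card (colk k r ` Ek k r) \<in> ?S" using col_ic[OF k r] by blast
  have "card (colk k r ` Ek k r) = 3*k - 2 + r" using le cin lb_card[OF k r] by (meson le_antisym)
  then have "3*k - 2 + r \<in> ?S" using cin by simp
  then show ?thesis unfolding t_max_def using fin le by (intro Max_eqI) simp_all
qed

lemma sg:
  assumes k: "0<k" and r: "r \<le> 1"
  shows "simple_graph {0..<2*k+r} (Ek k r)"
  unfolding simple_graph_def
proof (intro conjI ballI)
  show "finite {0..<2*k+r}" by simp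
  fix e assume "e \<in> Ek k r"
  then consider (R) i where "i<k" "e = rg i" | (X) i a b where "i+1<k" "a<2" "b<2" "e = cr i a b"
      | (Q) "r = 1" "e = pd k" unfolding Ek_def by (auto split: if_splits)
  then show "\<exists>u v. u \<in> {0..<2*k+r} \<and> v \<in> {0..<2*k+r} \<and> u \<noteq> v \<and> e = {u, v}"
  proof cases
    case R then show ?thesis unfolding rg_def by (intro exI[of _ "2*i"] exI[of _ "2*i+1"]) auto
  next
    case X then show ?thesis unfolding cr_def by (intro exI[of _ "2*i+a"] exI[of _ "2*i+2+b"]) auto
  next
    case Q then show ?thesis unfolding pd_def using k by (intro exI[of _ "0"] exI[of _ "2*k"]) auto
  qed
qed



definition SV :: "real \<Rightarrow> real \<Rightarrow> real \<Rightarrow> complex set" where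
  "SV x y1 y2 = {z. Re z = x \<and> y1 \<le> Im z \<and> Im z \<le> y2}"
definition SH :: "real \<Rightarrow> real \<Rightarrow> real \<Rightarrow> complex set" where
  "SH y x1 x2 = {z. Im z = y \<and> x1 \<le> Re z \<and> Re z \<le> x2}"

definition XS :: "nat \<Rightarrow> nat \<Rightarrow> complex set" where
  "XS t j = (if t = 0 then {z. Re z = real j \<and> -1 < Im z \<and> Im z < 1}
     else if t = 1 then {z. Im z = 1 \<and> real j < Re z \<and> Re z < real j + 1}
     else if t = 2 then {z. Im z = -1 \<and> real j < Re z \<and> Re z < real j + 1}
     else if t = 3 then {z. real j < Re z \<and> Re z < real j + 1 \<and> Im z = 1 - 2 * (Re z - real j)}
     else if t = 4 then {z. Re z = real j \<and> -2 - real j \<le> Im z \<and> Im z < -1} \<union> SH (-2 - real j) (-1 - real j) (real j)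
         \<union> SV (-1 - real j) (-2 - real j) (2 + real j) \<union> SH (2 + real j) (-1 - real j) (real j + 1)
         \<union> {z. Re z = real j + 1 \<and> 1 < Im z \<and> Im z \<le> 2 + real j}
     else {z. Re z = 0 \<and> 1 < Im z \<and> Im z < 3/2})"

lemma tri: "j = l \<or> real j + 1 \<le> real l \<or> real l + 1 \<le> real j"
proof -
  have "j = l \<or> j + 1 \<le> l \<or> l + 1 \<le> j" by linarith
  then show ?thesis by (metis of_nat_1 of_nat_add of_nat_le_iff)
qed

lemma XS_disj:
  assumes "t < 6" "t' < 6" "(t, j) \<noteq> (t', l)" "t = 5 \<Longrightarrow> j = 0" "t' = 5 \<Longrightarrow> l = 0"
  shows "XS t j \<inter> XS t' l = {}"
proof -
  have j0: "0 \<le> real j" "0 \<le> real l" by auto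
  have "t = 0 \<or> t = 1 \<or> t = 2 \<or> t = 3 \<or> t = 4 \<or> t = 5" "t' = 0 \<or> t' = 1 \<or> t' = 2 \<or> t' = 3 \<or> t' = 4 \<or> t' = 5" using assms by auto
  then show ?thesis using assms tri[of j l] j0
    unfolding XS_def SV_def SH_def by (elim disjE; auto)
qed


definition pt :: "nat \<Rightarrow> nat \<Rightarrow> complex" where
  "pt k v = (if v < 2*k then Complex (real (v div 2)) (if even v then 1 else -1) else Complex 0 (3/2))"

lemma pt_x: "j<k \<Longrightarrow> pt k (2*j) = Complex (real j) 1" by (simp add: pt_def)
lemma pt_y: "j<k \<Longrightarrow> pt k (2*j+1) = Complex (real j) (-1)" by (simp add: pt_def)
lemma pt_t: "pt k (2*k) = Complex 0 (3/2)" by (simp add: pt_def)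

lemma pt_XS: "pt k v \<notin> XS t j"
proof (cases "v < 2*k")
  case True
  then have p: "pt k v = Complex (real (v div 2)) (if even v then 1 else -1)" by (simp add: pt_def)
  show ?thesis unfolding p using tri[of j "v div 2"]
    by (cases "t = 0 \<or> t = 1 \<or> t = 2 \<or> t = 3 \<or> t = 4"; auto simp: XS_def SV_def SH_def)
next
  case False
  then have p: "pt k v = Complex 0 (3/2)" by (simp add: pt_def)
  show ?thesis unfolding p by (auto simp: XS_def SV_def SH_def)
qed

lemma seg_v: "y1 \<le> y2 \<Longrightarrow> closed_segment (Complex x y1) (Complex x y2) = SV x y1 y2"
  by (auto simp: closed_segment_same_Re closed_segment_eq_real_ivl SV_def)
lemma seg_v': "y1 \<le> y2 \<Longrightarrow> closed_segment (Complex x y2) (Complex x y1) = SV x y1 y2"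
  by (auto simp: closed_segment_same_Re closed_segment_eq_real_ivl SV_def)
lemma seg_h: "x1 \<le> x2 \<Longrightarrow> closed_segment (Complex x1 y) (Complex x2 y) = SH y x1 x2"
  by (auto simp: closed_segment_same_Im closed_segment_eq_real_ivl SH_def)
lemma seg_h': "x1 \<le> x2 \<Longrightarrow> closed_segment (Complex x2 y) (Complex x1 y) = SH y x1 x2"
  by (auto simp: closed_segment_same_Im closed_segment_eq_real_ivl SH_def)

lemma seg_d: "closed_segment (Complex j 1) (Complex (j+1) (-1)) \<subseteq> {z. j \<le> Re z \<and> Re z \<le> j+1 \<and> Im z = 1 - 2 * (Re z - j)}"
proof
  fix z assume "z \<in> closed_segment (Complex j 1) (Complex (j+1) (-1))"
  then obtain u where u: "0 \<le> u" "u \<le> 1" "z = (1-u) *\<^sub>R Complex j 1 + u *\<^sub>R Complex (j+1) (-1)"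
    unfolding closed_segment_def by blast
  have "Re z = j + u" "Im z = 1 - 2*u" unfolding u(3) by (simp_all add: algebra_simps)
  then show "z \<in> {z. j \<le> Re z \<and> Re z \<le> j+1 \<and> Im z = 1 - 2 * (Re z - j)}" using u by auto
qed


definition outer :: "nat \<Rightarrow> real \<Rightarrow> complex" where
  "outer j = linepath (Complex (real j) (-1)) (Complex (real j) (-2 - real j)) +++
     (linepath (Complex (real j) (-2 - real j)) (Complex (-1 - real j) (-2 - real j)) +++
     (linepath (Complex (-1 - real j) (-2 - real j)) (Complex (-1 - real j) (2 + real j)) +++
     (linepath (Complex (-1 - real j) (2 + real j)) (Complex (real j + 1) (2 + real j)) +++
      linepath (Complex (real j + 1) (2 + real j)) (Complex (real j + 1) 1))))"

lemma outer_props: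
  shows "arc (outer j)" "pathstart (outer j) = Complex (real j) (-1)" "pathfinish (outer j) = Complex (real j + 1) 1"
    "path_image (outer j) \<subseteq> {Complex (real j) (-1), Complex (real j + 1) 1} \<union> XS 4 j"
proof -
  let ?J = "real j"
  define L1 where "L1 = linepath (Complex ?J (-1)) (Complex ?J (-2 - ?J))"
  define L2 where "L2 = linepath (Complex ?J (-2 - ?J)) (Complex (-1 - ?J) (-2 - ?J))"
  define L3 where "L3 = linepath (Complex (-1 - ?J) (-2 - ?J)) (Complex (-1 - ?J) (2 + ?J))"
  define L4 where "L4 = linepath (Complex (-1 - ?J) (2 + ?J)) (Complex (?J + 1) (2 + ?J))"
  define L5 where "L5 = linepath (Complex (?J + 1) (2 + ?J)) (Complex (?J + 1) 1)"
  have o: "outer j = L1 +++ (L2 +++ (L3 +++ (L4 +++ L5)))" unfolding outer_def L1_def L2_def L3_def L4_def L5_def ..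
  have J: "0 \<le> ?J" by simp
  have i1: "path_image L1 = SV ?J (-2 - ?J) (-1)" unfolding L1_def using J by (simp add: seg_v')
  have i2: "path_image L2 = SH (-2 - ?J) (-1 - ?J) ?J" unfolding L2_def using J by (simp add: seg_h')
  have i3: "path_image L3 = SV (-1 - ?J) (-2 - ?J) (2 + ?J)" unfolding L3_def using J by (simp add: seg_v)
  have i4: "path_image L4 = SH (2 + ?J) (-1 - ?J) (?J + 1)" unfolding L4_def using J by (simp add: seg_h)
  have i5: "path_image L5 = SV (?J + 1) 1 (2 + ?J)" unfolding L5_def using J by (simp add: seg_v')
  have a1: "arc L1" "arc L2" "arc L3" "arc L4" "arc L5"
    unfolding L1_def L2_def L3_def L4_def L5_def using J by (auto simp: complex_eq_iff)
  have s: "pathstart L1 = Complex ?J (-1)" "pathstart L2 = Complex ?J (-2 - ?J)" "pathstart L3 = Complex (-1 - ?J) (-2 - ?J)"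
     "pathstart L4 = Complex (-1 - ?J) (2 + ?J)" "pathstart L5 = Complex (?J + 1) (2 + ?J)"
    unfolding L1_def L2_def L3_def L4_def L5_def by simp_all
  have f: "pathfinish L1 = Complex ?J (-2 - ?J)" "pathfinish L2 = Complex (-1 - ?J) (-2 - ?J)" "pathfinish L3 = Complex (-1 - ?J) (2 + ?J)"
     "pathfinish L4 = Complex (?J + 1) (2 + ?J)" "pathfinish L5 = Complex (?J + 1) 1"
    unfolding L1_def L2_def L3_def L4_def L5_def by simp_all
  have p45: "path_image (L4 +++ L5) = SH (2 + ?J) (-1 - ?J) (?J + 1) \<union> SV (?J + 1) 1 (2 + ?J)"
    using path_image_join[of L4 L5] s f i4 i5 by simp
  have p35: "path_image (L3 +++ (L4 +++ L5)) = SV (-1 - ?J) (-2 - ?J) (2 + ?J) \<union> (SH (2 + ?J) (-1 - ?J) (?J + 1) \<union> SV (?J + 1) 1 (2 + ?J))"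
    using path_image_join[of L3 "L4 +++ L5"] s f i3 p45 by simp
  have p25: "path_image (L2 +++ (L3 +++ (L4 +++ L5))) = SH (-2 - ?J) (-1 - ?J) ?J \<union> (SV (-1 - ?J) (-2 - ?J) (2 + ?J) \<union> (SH (2 + ?J) (-1 - ?J) (?J + 1) \<union> SV (?J + 1) 1 (2 + ?J)))"
    using path_image_join[of L2 "L3 +++ (L4 +++ L5)"] s f i2 p35 by simp
  have p15: "path_image (outer j) = SV ?J (-2 - ?J) (-1) \<union> (SH (-2 - ?J) (-1 - ?J) ?J \<union> (SV (-1 - ?J) (-2 - ?J) (2 + ?J) \<union> (SH (2 + ?J) (-1 - ?J) (?J + 1) \<union> SV (?J + 1) 1 (2 + ?J))))"
    unfolding o using path_image_join[of L1 "L2 +++ (L3 +++ (L4 +++ L5))"] s f i1 p25 by simp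
  have b45: "arc (L4 +++ L5)"
    by (rule arc_join[OF a1(4) a1(5)]) (use s f i4 i5 in \<open>auto simp: SV_def SH_def complex_eq_iff\<close>)
  have b35: "arc (L3 +++ (L4 +++ L5))"
    by (rule arc_join[OF a1(3) b45]) (use s f i3 p45 J in \<open>auto simp: SV_def SH_def complex_eq_iff\<close>)
  have b25: "arc (L2 +++ (L3 +++ (L4 +++ L5)))"
    by (rule arc_join[OF a1(2) b35]) (use s f i2 p35 J in \<open>auto simp: SV_def SH_def complex_eq_iff\<close>)
  show "arc (outer j)" unfolding o
    by (rule arc_join[OF a1(1) b25]) (use s f i1 p25 J in \<open>auto simp: SV_def SH_def complex_eq_iff\<close>)
  show "pathstart (outer j) = Complex (real j) (-1)" unfolding o using s by simp
  show "pathfinish (outer j) = Complex (real j + 1) 1" unfolding o using f by simp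
  show "path_image (outer j) \<subseteq> {Complex (real j) (-1), Complex (real j + 1) 1} \<union> XS 4 j"
    unfolding p15 XS_def using J by (auto simp: SV_def SH_def complex_eq_iff)
qed


definition gam :: "nat \<Rightarrow> nat set \<Rightarrow> real \<Rightarrow> complex" where
 "gam k e = (if odd (Min e) \<and> Max e = Min e + 1 then outer (Min e div 2) else linepath (pt k (Min e)) (pt k (Max e)))"

definition ET :: "nat \<Rightarrow> nat \<Rightarrow> nat \<Rightarrow> nat set" where
 "ET k t j = (if t = 0 then rg j else if t = 1 then cr j 0 0 else if t = 2 then cr j 1 1
    else if t = 3 then cr j 0 1 else if t = 4 then cr j 1 0 else pd k)"

definition okc :: "nat \<Rightarrow> nat \<Rightarrow> nat \<Rightarrow> nat \<Rightarrow> bool" where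
 "okc k r t j \<longleftrightarrow> t < 6 \<and> (t = 0 \<longrightarrow> j < k) \<and> (0 < t \<and> t < 5 \<longrightarrow> j+1 < k) \<and> (t = 5 \<longrightarrow> j = 0 \<and> r = 1)"

lemma edge_code:
  assumes "e \<in> Ek k r"
  shows "\<exists>t j. okc k r t j \<and> e = ET k t j"
proof -
  from assms consider (R) i where "i<k" "e = rg i" | (X) i a b where "i+1<k" "a<2" "b<2" "e = cr i a b"
      | (Q) "r = 1" "e = pd k" unfolding Ek_def by (auto split: if_splits)
  then show ?thesis
  proof cases
    case R then show ?thesis by (intro exI[of _ 0] exI[of _ i]) (simp add: okc_def ET_def)
  next
    case X
    then consider "a = 0" "b = 0" | "a = 1" "b = 1" | "a = 0" "b = 1" | "a = 1" "b = 0" by linarith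
    then show ?thesis
    proof cases
      case 1 then show ?thesis using X by (intro exI[of _ 1] exI[of _ i]) (simp add: okc_def ET_def)
    next
      case 2 then show ?thesis using X by (intro exI[of _ 2] exI[of _ i]) (simp add: okc_def ET_def)
    next
      case 3 then show ?thesis using X by (intro exI[of _ 3] exI[of _ i]) (simp add: okc_def ET_def)
    next
      case 4 then show ?thesis using X by (intro exI[of _ 4] exI[of _ i]) (simp add: okc_def ET_def)
    qed
  next
    case Q then show ?thesis by (intro exI[of _ 5] exI[of _ 0]) (simp add: okc_def ET_def)
  qed
qed

lemma code_ok:
  assumes "okc k r t j" "0 < k"
  shows "arc (gam k (ET k t j)) \<and> {pathstart (gam k (ET k t j)), pathfinish (gam k (ET k t j))} = pt k ` ET k t j
     \<and> path_image (gam k (ET k t j)) \<subseteq> pt k ` ET k t j \<union> XS t j"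
proof -
  have J: "0 \<le> real j" by simp
  have "t = 0 \<or> t = 1 \<or> t = 2 \<or> t = 3 \<or> t = 4 \<or> t = 5" using assms unfolding okc_def by auto
  then consider "t = 0" | "t = 1" | "t = 2" | "t = 3" | "t = 4" | "t = 5" by blast
  then show ?thesis
  proof cases
    case 1
    then have jk: "j<k" using assms unfolding okc_def by auto
    have g: "gam k (ET k t j) = linepath (Complex (real j) 1) (Complex (real j) (-1))"
      using 1 jk by (simp add: gam_def ET_def rg_def pt_def)
    have e: "pt k ` ET k t j = {Complex (real j) 1, Complex (real j) (-1)}"
      using 1 jk pt_x[of j k] pt_y[of j k] by (simp add: ET_def rg_def)
    show ?thesis unfolding g e using J
      by (auto simp: complex_eq_iff seg_v' XS_def SV_def 1)
  next
    case 2
    then have jk: "j+1<k" using assms unfolding okc_def by auto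
    have g: "gam k (ET k t j) = linepath (Complex (real j) 1) (Complex (real j + 1) 1)"
      using 2 jk by (simp add: gam_def ET_def cr_def pt_def add.commute)
    have e: "pt k ` ET k t j = {Complex (real j) 1, Complex (real j + 1) 1}"
      using 2 jk pt_x[of j k] pt_x[of "j+1" k] by (simp add: ET_def cr_def add.commute)
    show ?thesis unfolding g e using J
      by (auto simp: complex_eq_iff seg_h XS_def SH_def 2)
  next
    case 3
    then have jk: "j+1<k" using assms unfolding okc_def by auto
    have g: "gam k (ET k t j) = linepath (Complex (real j) (-1)) (Complex (real j + 1) (-1))"
      using 3 jk by (simp add: gam_def ET_def cr_def pt_def add.commute)
    have e: "pt k ` ET k t j = {Complex (real j) (-1), Complex (real j + 1) (-1)}"
      using 3 jk pt_y[of j k] pt_y[of "j+1" k] by (simp add: ET_def cr_def add.commute)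
    show ?thesis unfolding g e using J
      by (auto simp: complex_eq_iff seg_h XS_def SH_def 3)
  next
    case 4
    then have jk: "j+1<k" using assms unfolding okc_def by auto
    have g: "gam k (ET k t j) = linepath (Complex (real j) 1) (Complex (real j + 1) (-1))"
      using 4 jk by (simp add: gam_def ET_def cr_def pt_def add.commute)
    have e: "pt k ` ET k t j = {Complex (real j) 1, Complex (real j + 1) (-1)}"
      using 4 jk pt_x[of j k] pt_y[of "j+1" k] by (simp add: ET_def cr_def add.commute)
    have "path_image (gam k (ET k t j)) \<subseteq> {z. real j \<le> Re z \<and> Re z \<le> real j+1 \<and> Im z = 1 - 2 * (Re z - real j)}"
      unfolding g using seg_d[of "real j"] by simp
    then show ?thesis unfolding g e using J
      by (auto simp: complex_eq_iff XS_def 4)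
  next
    case 5
    then have jk: "j+1<k" using assms unfolding okc_def by auto
    have g: "gam k (ET k t j) = outer j"
      using 5 jk by (simp add: gam_def ET_def cr_def)
    have e: "pt k ` ET k t j = {Complex (real j) (-1), Complex (real j + 1) 1}"
      using 5 jk pt_y[of j k] pt_x[of "j+1" k] by (simp add: ET_def cr_def add.commute)
    show ?thesis unfolding g e using outer_props[of j] 5 by auto
  next
    case 6
    then have r: "j = 0" "r = 1" using assms unfolding okc_def by auto
    have g: "gam k (ET k t j) = linepath (Complex 0 1) (Complex 0 (3/2))"
      using 6 assms(2) by (simp add: gam_def ET_def pd_def pt_def)
    have e: "pt k ` ET k t j = {Complex 0 1, Complex 0 (3/2)}"
      using 6 assms(2) pt_x[of 0 k] pt_t[of k] by (simp add: ET_def pd_def)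
    show ?thesis unfolding g e using r
      by (auto simp: complex_eq_iff seg_v XS_def SV_def 6)
  qed
qed


lemma E_sub_V: "e \<in> Ek k r \<Longrightarrow> e \<subseteq> {0..<2*k+r}"
  unfolding Ek_def by (auto simp: rg_def cr_def pd_def split: if_splits)

lemma pt_inj: assumes "r \<le> 1" shows "inj_on (pt k) {0..<2*k+r}"
proof (rule inj_onI)
  fix u v assume u: "u \<in> {0..<2*k+r}" and v: "v \<in> {0..<2*k+r}" and eq: "pt k u = pt k v"
  show "u = v"
  proof (cases "u < 2*k"; cases "v < 2*k")
    assume a: "u < 2*k" "v < 2*k"
    then have "real (u div 2) = real (v div 2)" "(if even u then 1 else -1 :: real) = (if even v then 1 else -1)"
      using eq by (simp_all add: pt_def complex_eq_iff)
    then have "u div 2 = v div 2" "even u = even v" by (auto split: if_splits)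
    then show "u = v" by (metis div_mult_mod_eq odd_iff_mod_2_eq_one even_iff_mod_2_eq_zero)
  next
    assume a: "u < 2*k" "\<not> v < 2*k"
    then show "u = v" using eq by (auto simp: pt_def complex_eq_iff split: if_splits)
  next
    assume a: "\<not> u < 2*k" "v < 2*k"
    then show "u = v" using eq by (auto simp: pt_def complex_eq_iff split: if_splits)
  next
    assume a: "\<not> u < 2*k" "\<not> v < 2*k"
    then show "u = v" using u v assms by auto
  qed
qed

lemma planar_Ek:
  assumes k: "0 < k" and r: "r \<le> 1"
  shows "planar {0..<2*k+r} (Ek k r)"
  unfolding planar_def planar_embedding_def
proof (intro exI[of _ "pt k"] exI[of _ "gam k"] conjI ballI impI)
  let ?V = "{0..<2*k+r}"
  have inj: "inj_on (pt k) ?V" by (rule pt_inj[OF r])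
  show "inj_on (pt k) ?V" by (rule inj)
  have C: "\<exists>t j. okc k r t j \<and> e = ET k t j \<and> arc (gam k e) \<and> {pathstart (gam k e), pathfinish (gam k e)} = pt k ` e
     \<and> path_image (gam k e) \<subseteq> pt k ` e \<union> XS t j" if "e \<in> Ek k r" for e
    using edge_code[OF that] code_ok k by blast
  fix e assume e: "e \<in> Ek k r"
  from C[OF e] obtain t j where tj: "okc k r t j" "e = ET k t j" "arc (gam k e)"
    "{pathstart (gam k e), pathfinish (gam k e)} = pt k ` e" "path_image (gam k e) \<subseteq> pt k ` e \<union> XS t j" by blast
  show "arc (gam k e)" by (rule tj(3))
  show "{pathstart (gam k e), pathfinish (gam k e)} = pt k ` e" by (rule tj(4))
  {
    fix v assume v: "v \<in> ?V" "v \<notin> e"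
    show "pt k v \<notin> path_image (gam k e)"
    proof
      assume "pt k v \<in> path_image (gam k e)"
      then have "pt k v \<in> pt k ` e" using tj(5) pt_XS by blast
      then obtain w where w: "w \<in> e" "pt k v = pt k w" by auto
      have "w \<in> ?V" using w E_sub_V[OF e] by auto
      then have "v = w" using inj v w unfolding inj_on_def by blast
      then show False using v w by simp
    qed
  }
  fix e' assume e': "e' \<in> Ek k r" "e \<noteq> e'"
  from C[OF e'(1)] obtain t' l where tl: "okc k r t' l" "e' = ET k t' l"
    "path_image (gam k e') \<subseteq> pt k ` e' \<union> XS t' l" by blast
  have ne: "(t, j) \<noteq> (t', l)" using tj(2) tl(2) e'(2) by auto
  have dj: "XS t j \<inter> XS t' l = {}" by (rule XS_disj) (use tj(1) tl(1) ne in \<open>auto simp: okc_def\<close>)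
  show "path_image (gam k e) \<inter> path_image (gam k e') \<subseteq> pt k ` (e \<inter> e')"
  proof
    fix z assume z: "z \<in> path_image (gam k e) \<inter> path_image (gam k e')"
    have z1: "z \<in> pt k ` e" using z tj(5) tl(3) dj pt_XS by blast
    have z2: "z \<in> pt k ` e'" using z tj(5) tl(3) dj pt_XS by blast
    from z1 obtain u where u: "u \<in> e" "z = pt k u" by auto
    from z2 obtain w where w: "w \<in> e'" "z = pt k w" by auto
    have "u \<in> ?V" "w \<in> ?V" using u w E_sub_V[OF e] E_sub_V[OF e'(1)] by auto
    then have "u = w" using inj u w unfolding inj_on_def by metis
    then show "z \<in> pt k ` (e \<inter> e')" using u w by auto
  qed
qed


theorem mainTheorem7:
  fixes n :: nat
  assumes "n \<ge> 2"
  shows "\<exists>(V :: nat set) (E :: nat set set).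
           simple_graph V E \<and> card V = n \<and> planar V E \<and>
           interval_colourable V E \<and> t_max V E = (3 * n) div 2 - 2"
proof -
  define k where "k = n div 2"
  define r where "r = n mod 2"
  have n: "n = 2*k + r" unfolding k_def r_def by simp
  have k: "0 < k" using assms unfolding k_def by simp
  have r: "r \<le> 1" unfolding r_def by simp
  have t: "(3 * n) div 2 - 2 = 3*k - 2 + r"
  proof (cases "r = 0")
    case True then show ?thesis using n k by simp
  next
    case False then have "r = 1" using r by simp
    then show ?thesis using n k by simp
  qed
  show ?thesis
  proof (intro exI[of _ "{0..<n}"] exI[of _ "Ek k r"] conjI)
    show "simple_graph {0..<n} (Ek k r)" using sg[OF k r] n by simp
    show "card {0..<n} = n" by simp
    show "planar {0..<n} (Ek k r)" using planar_Ek[OF k r] n by simp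
    show "interval_colourable {0..<n} (Ek k r)" unfolding interval_colourable_def using col_ic[OF k r] n by auto
    show "t_max {0..<n} (Ek k r) = (3 * n) div 2 - 2" using tmax_eq[OF k r] n t by simp
  qed
qed

end
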